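(* Let $\widehat{\mathbf Y}$ be an optimal solution of the SDP, $\epsilon=\|\widehat{\mathbf Y}-\mathbf Y^*\|_1/\|\mathbf Y^*\|_1$, and let $U_1,\dots,U_k$ be the sets produced by Step 2 applied to the output of Step 1 on input $\widehat{\mathbf Y},n,k$ (both described in the context). Then there exist a permutation $\pi$ of $[k]$ and a universal constant $C>0$ such that \[ \Big|\bigcup_{a\in[k]}C^*_a\cap U_{\pi(a)}\Big|\ge(1-C\epsilon)n. \]
   Context: Integers $n\ge4$, $k\ge2$, $k\mid n$; points $\mathbf h_1,\dots,\mathbf h_n\in\mathbb R^d$ with ground-truth labels $\sigma^*:[n]\to[k]$ and clusters $C^*_a=\{i:\sigma^*(i)=a\}$, each of size $n/k$. $Y^*_{ij}=\mathbb 1\{\sigma^*(i)=\sigma^*(j)\}$. SDP: $A_{ij}=\|\mathbf h_i-\mathbf h_j\|_2^2$; $\widehat{\mathbf Y}$ minimizes $\langle\mathbf Y,\mathbf A\rangle$ subject to $\mathbf Y\mathbf 1_n=\frac nk\mathbf 1_n$, $\mathbf Y\succeq0$, $\mathrm{diag}(\mathbf Y)=\mathbf 1_n$, $\mathbf Y\ge0$. $\|\cdot\|_1$ is the entrywise $\ell_1$ norm; $\widehat{\mathbf Y}_{u\bullet}$ is the $u$-th row. Step 1: set $V=[n]$, $t=0$; while $V\setminus\bigcup_{i\le t}B_i\ne\emptyset$: increase $t$, let $V_t=V\setminus\bigcup_{i<t}B_i$, for $u\in V_t$ let $B(u)=\{w\in V_t:\|\widehat{\mathbf Y}_{u\bullet}-\widehat{\mathbf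 Y}_{w\bullet}\|_1\le\frac{n}{4k}\}$, let $B_t$ be a largest $B(u)$, truncated arbitrarily to size $n/k$ if larger; output $B_1,\dots,B_{k'}$. Step 2: choose the $k$ sets of largest cardinality among $B_1,\dots,B_{k'}$, rename them $U_1,\dots,U_k$, and distribute the elements of the remaining sets arbitrarily among $U_1,\dots,U_k$ so that each $U_t$ has exactly $n/k$ elements. *)

theory Defs
  imports Complex_Main
begin

text \<open>Index sets: points are indexed by [n] = {0..<n}, clusters by [k] = {0..<k}.
  Matrices are functions nat \<Rightarrow> nat \<Rightarrow> real, only entries with indices < n matter.
  Points h_i in R^d are functions nat \<Rightarrow> real, only coordinates < d matter.\<close>

definition sqdist :: "nat \<Rightarrow> (nat \<Rightarrow> nat \<Rightarrow> real) \<Rightarrow> nat \<Rightarrow> nat \<Rightarrow> real" where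
  "sqdist d h i j = (\<Sum>l<d. (h i l - h j l)^2)"

definition frob_inner :: "nat \<Rightarrow> (nat \<Rightarrow> nat \<Rightarrow> real) \<Rightarrow> (nat \<Rightarrow> nat \<Rightarrow> real) \<Rightarrow> real" where
  "frob_inner n Y A = (\<Sum>i<n. \<Sum>j<n. Y i j * A i j)"

definition entry_l1 :: "nat \<Rightarrow> (nat \<Rightarrow> nat \<Rightarrow> real) \<Rightarrow> real" where
  "entry_l1 n Y = (\<Sum>i<n. \<Sum>j<n. \<bar>Y i j\<bar>)"

definition psd :: "nat \<Rightarrow> (nat \<Rightarrow> nat \<Rightarrow> real) \<Rightarrow> bool" where
  "psd n Y \<longleftrightarrow> (\<forall>i<n. \<forall>j<n. Y i j = Y j i) \<and>
     (\<forall>x :: nat \<Rightarrow> real. (\<Sum>i<n. \<Sum>j<n. x i * Y i j * x j) \<ge> 0)"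

definition sdp_feasible :: "nat \<Rightarrow> nat \<Rightarrow> (nat \<Rightarrow> nat \<Rightarrow> real) \<Rightarrow> bool" where
  "sdp_feasible n k Y \<longleftrightarrow>
     (\<forall>i<n. (\<Sum>j<n. Y i j) = real n / real k) \<and> psd n Y \<and>
     (\<forall>i<n. Y i i = 1) \<and> (\<forall>i<n. \<forall>j<n. Y i j \<ge> 0)"

definition sdp_optimal :: "nat \<Rightarrow> nat \<Rightarrow> nat \<Rightarrow> (nat \<Rightarrow> nat \<Rightarrow> real) \<Rightarrow> (nat \<Rightarrow> nat \<Rightarrow> real) \<Rightarrow> bool" where
  "sdp_optimal n k d h Y \<longleftrightarrow> sdp_feasible n k Y \<and>
     (\<forall>Y'. sdp_feasible n k Y' \<longrightarrow> frob_inner n Y (sqdist d h) \<le> frob_inner n Y' (sqdist d h))"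

definition Ystar :: "(nat \<Rightarrow> nat) \<Rightarrow> nat \<Rightarrow> nat \<Rightarrow> real" where
  "Ystar \<sigma> i j = (if \<sigma> i = \<sigma> j then 1 else 0)"

definition cluster :: "nat \<Rightarrow> (nat \<Rightarrow> nat) \<Rightarrow> nat \<Rightarrow> nat set" where
  "cluster n \<sigma> a = {i. i < n \<and> \<sigma> i = a}"

definition rowdist :: "nat \<Rightarrow> (nat \<Rightarrow> nat \<Rightarrow> real) \<Rightarrow> nat \<Rightarrow> nat \<Rightarrow> real" where
  "rowdist n Y u w = (\<Sum>j<n. \<bar>Y u j - Y w j\<bar>)"

definition ballB :: "nat \<Rightarrow> nat \<Rightarrow> (nat \<Rightarrow> nat \<Rightarrow> real) \<Rightarrow> nat set \<Rightarrow> nat \<Rightarrow> nat set" where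
  "ballB n k Y V u = {w \<in> V. rowdist n Y u w \<le> real n / (4 * real k)}"

text \<open>Bs = [B_1,...,B_k'] is a possible output of Step 1 (all arbitrary choices allowed).
  Bs ! t is B_{t+1}; the remaining set V_{t+1} is [n] minus the earlier blocks.\<close>
definition step1_output :: "nat \<Rightarrow> nat \<Rightarrow> (nat \<Rightarrow> nat \<Rightarrow> real) \<Rightarrow> nat set list \<Rightarrow> bool" where
  "step1_output n k Y Bs \<longleftrightarrow>
     (\<forall>t<length Bs.
        let V = {0..<n} - (\<Union>i<t. Bs ! i) in
        V \<noteq> {} \<and>
        (\<exists>u\<in>V. (\<forall>w\<in>V. card (ballB n k Y V w) \<le> card (ballB n k Y V u)) \<and>
                Bs ! t \<subseteq> ballB n k Y V u \<and>
                card (Bs ! t) = min (card (ballB n k Y V u)) (n div k))) \<and>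
     (\<Union>i<length Bs. Bs ! i) = {0..<n}"

definition step2_output :: "nat \<Rightarrow> nat \<Rightarrow> nat set list \<Rightarrow> (nat \<Rightarrow> nat set) \<Rightarrow> bool" where
  "step2_output n k Bs U \<longleftrightarrow>
     (\<exists>J :: nat \<Rightarrow> nat.
        inj_on J {..<k} \<and> J ` {..<k} \<subseteq> {..<length Bs} \<and>
        (\<forall>a<k. \<forall>i<length Bs. i \<notin> J ` {..<k} \<longrightarrow> card (Bs ! i) \<le> card (Bs ! J a)) \<and>
        (\<forall>a<k. Bs ! J a \<subseteq> U a \<and> card (U a) = n div k) \<and>
        (\<forall>a<k. \<forall>b<k. a \<noteq> b \<longrightarrow> U a \<inter> U b = {}) \<and>
        (\<Union>a<k. U a) = {0..<n})"

end

theory Submission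
  imports Defs
begin
lemma extend_bij:
  assumes "inj_on p S" "S \<subseteq> {..<k::nat}" "p ` S \<subseteq> {..<k}"
  shows "\<exists>\<pi>. bij_betw \<pi> {..<k} {..<k} \<and> (\<forall>a\<in>S. \<pi> a = p a)"
proof -
  have fS: "finite S" using assms(2) finite_subset by blast
  have "card ({..<k} - S) = card ({..<k} - p ` S)"
    using assms fS by (simp add: card_Diff_subset card_image)
  then obtain q where q: "bij_betw q ({..<k} - S) ({..<k} - p ` S)"
    using finite_same_card_bij by blast
  define \<pi> where "\<pi> a = (if a \<in> S then p a else q a)" for a
  have b1: "bij_betw \<pi> S (p ` S)"
    using assms(1) by (auto simp: bij_betw_def \<pi>_def inj_on_def)
  have b2: "bij_betw \<pi> ({..<k} - S) ({..<k} - p ` S)"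
    using q by (rule bij_betw_cong[THEN iffD1, rotated]) (auto simp: \<pi>_def)
  have "bij_betw \<pi> (S \<union> ({..<k} - S)) (p ` S \<union> ({..<k} - p ` S))"
    by (rule bij_betw_combine[OF b1 b2]) auto
  moreover have "S \<union> ({..<k} - S) = {..<k}" "p ` S \<union> ({..<k} - p ` S) = {..<k}"
    using assms by auto
  ultimately show ?thesis by (auto simp: \<pi>_def)
qed

lemma Ystar_row:
  "(\<Sum>j<n. \<bar>Ystar \<sigma> i j\<bar>) = real (card (cluster n \<sigma> (\<sigma> i)))"
proof -
  have "(\<Sum>j<n. \<bar>Ystar \<sigma> i j\<bar>) = (\<Sum>j\<in>{..<n}. if j \<in> cluster n \<sigma> (\<sigma> i) then 1 else 0)"
    by (rule sum.cong) (auto simp: Ystar_def cluster_def)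
  also have "\<dots> = real (card (cluster n \<sigma> (\<sigma> i)))"
    by (subst sum.If_cases) (auto simp: cluster_def Int_def)
  finally show ?thesis .
qed

lemma sep_lemma:
  fixes n k :: nat and Y :: "nat \<Rightarrow> nat \<Rightarrow> real"
  assumes kpos: "k > 0" and cl: "card (cluster n \<sigma> (\<sigma> w1)) = n div k" and kdvd: "k dvd n"
    and npos: "n > 0"
    and d1: "rowdist n Y u w1 \<le> real n / (4 * real k)"
    and d2: "rowdist n Y u w2 \<le> real n / (4 * real k)"
    and r1: "(\<Sum>j<n. \<bar>Y w1 j - Ystar \<sigma> w1 j\<bar>) \<le> real n / (8 * real k)"
    and r2: "(\<Sum>j<n. \<bar>Y w2 j - Ystar \<sigma> w2 j\<bar>) \<le> real n / (8 * real k)"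
  shows "\<sigma> w1 = \<sigma> w2"
proof (rule ccontr)
  assume ne: "\<sigma> w1 \<noteq> \<sigma> w2"
  have rn: "real (n div k) = real n / real k" using kdvd kpos by (auto simp: real_of_nat_div)
  have "real (n div k) = (\<Sum>j\<in>cluster n \<sigma> (\<sigma> w1). \<bar>Ystar \<sigma> w1 j - Ystar \<sigma> w2 j\<bar>)"
    using ne cl by (simp add: Ystar_def cluster_def)
  also have "\<dots> \<le> (\<Sum>j<n. \<bar>Ystar \<sigma> w1 j - Ystar \<sigma> w2 j\<bar>)"
    by (rule sum_mono2) (auto simp: cluster_def)
  also have "\<dots> \<le> (\<Sum>j<n. \<bar>Y w1 j - Ystar \<sigma> w1 j\<bar> + \<bar>Y u j - Y w1 j\<bar> + \<bar>Y u j - Y w2 j\<bar> + \<bar>Y w2 j - Ystar \<sigma> w2 j\<bar>)"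
    by (rule sum_mono) linarith
  also have "\<dots> = (\<Sum>j<n. \<bar>Y w1 j - Ystar \<sigma> w1 j\<bar>) + rowdist n Y u w1 + rowdist n Y u w2 + (\<Sum>j<n. \<bar>Y w2 j - Ystar \<sigma> w2 j\<bar>)"
    by (simp add: sum.distrib rowdist_def)
  also have "\<dots> \<le> 3 * real n / (4 * real k)" using d1 d2 r1 r2 by (simp add: field_simps)
  finally have "real n / real k \<le> 3 * real n / (4 * real k)" using rn by simp
  moreover have "real n / real k > 0" using npos kpos by simp
  ultimately show False by (simp add: field_simps)
qed

lemma same_lemma:
  fixes n k :: nat and Y :: "nat \<Rightarrow> nat \<Rightarrow> real"
  assumes eq: "\<sigma> g = \<sigma> g'"
    and r1: "(\<Sum>j<n. \<bar>Y g j - Ystar \<sigma> g j\<bar>) \<le> real n / (8 * real k)"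
    and r2: "(\<Sum>j<n. \<bar>Y g' j - Ystar \<sigma> g' j\<bar>) \<le> real n / (8 * real k)"
  shows "rowdist n Y g g' \<le> real n / (4 * real k)"
proof -
  have "rowdist n Y g g' \<le> (\<Sum>j<n. \<bar>Y g j - Ystar \<sigma> g j\<bar> + \<bar>Y g' j - Ystar \<sigma> g' j\<bar>)"
    unfolding rowdist_def
  proof (rule sum_mono)
    fix j have "Ystar \<sigma> g j = Ystar \<sigma> g' j" by (simp add: Ystar_def eq)
    then show "\<bar>Y g j - Y g' j\<bar> \<le> \<bar>Y g j - Ystar \<sigma> g j\<bar> + \<bar>Y g' j - Ystar \<sigma> g' j\<bar>" by linarith
  qed
  also have "\<dots> \<le> real n / (4 * real k)" using r1 r2 by (simp add: sum.distrib field_simps)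
  finally show ?thesis .
qed

lemma main_lemma:
  fixes n k :: nat and Y :: "nat \<Rightarrow> nat \<Rightarrow> real" and \<sigma> :: "nat \<Rightarrow> nat"
    and Bs :: "nat set list" and U :: "nat \<Rightarrow> nat set"
  assumes n4: "n \<ge> 4" and k2: "k \<ge> 2" and kdvd: "k dvd n"
    and sig: "\<forall>i<n. \<sigma> i < k" and cl: "\<forall>a<k. card (cluster n \<sigma> a) = n div k"
    and s1: "step1_output n k Y Bs" and s2: "step2_output n k Bs U"
  shows "\<exists>\<pi>. bij_betw \<pi> {..<k} {..<k} \<and>
        real (card (\<Union>a<k. cluster n \<sigma> a \<inter> U (\<pi> a)))
          \<ge> (1 - 32 * (entry_l1 n (\<lambda>i j. Y i j - Ystar \<sigma> i j) / entry_l1 n (Ystar \<sigma>))) * real n"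
proof -
  define N where "N = n div k"
  have kpos: "k > 0" and npos: "n > 0" using n4 k2 by auto
  have nN: "n = N * k" using kdvd by (simp add: N_def)
  have Npos: "N > 0" using nN npos by (cases N) auto
  define r where "r u = (\<Sum>j<n. \<bar>Y u j - Ystar \<sigma> u j\<bar>)" for u
  define thr where "thr = real n / (8 * real k)"
  define Good where "Good = {u. u < n \<and> r u \<le> thr}"
  define Bad where "Bad = {u. u < n \<and> \<not> r u \<le> thr}"
  define m where "m = card Bad"
  define G where "G a = cluster n \<sigma> a \<inter> Good" for a
  define B where "B t = Bs ! t" for t
  define L where "L = length Bs"
  define \<delta> where "\<delta> = entry_l1 n (\<lambda>i j. Y i j - Ystar \<sigma> i j)"
  define Vt where "Vt t = {0..<n} - (\<Union>i<t. B i)" for t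
  have fGood: "finite Good" and fBad: "finite Bad" by (auto simp: Good_def Bad_def)
  have BadEq: "Bad = {0..<n} - Good" by (auto simp: Good_def Bad_def)
  have fG: "finite (G a)" for a by (auto simp: G_def cluster_def)
  have Gsub: "G a \<subseteq> Good" for a by (auto simp: G_def)
  have sigG: "x \<in> G a \<Longrightarrow> \<sigma> x = a" for x a by (auto simp: G_def cluster_def)
  have cardG: "a < k \<Longrightarrow> card (G a) \<le> N" for a
    using cl card_mono[of "cluster n \<sigma> a" "G a"] by (auto simp: G_def N_def cluster_def)
  have s1t: "\<And>t. t < L \<Longrightarrow> Vt t \<noteq> {} \<and>
        (\<exists>u\<in>Vt t. (\<forall>w\<in>Vt t. card (ballB n k Y (Vt t) w) \<le> card (ballB n k Y (Vt t) u)) \<and>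
                B t \<subseteq> ballB n k Y (Vt t) u \<and>
                card (B t) = min (card (ballB n k Y (Vt t) u)) N)"
    using s1 unfolding step1_output_def Let_def L_def B_def Vt_def N_def by blast
  have s1u: "(\<Union>i<L. B i) = {0..<n}"
    using s1 unfolding step1_output_def L_def B_def by blast
  have BV: "t < L \<Longrightarrow> B t \<subseteq> Vt t" for t
    using s1t[of t] by (auto simp: ballB_def)
  have Bn: "t < L \<Longrightarrow> B t \<subseteq> {0..<n}" for t using BV by (auto simp: Vt_def)
  have fB: "t < L \<Longrightarrow> finite (B t)" for t using Bn finite_subset by blast
  have disj: "s < L \<Longrightarrow> t < L \<Longrightarrow> s \<noteq> t \<Longrightarrow> B s \<inter> B t = {}" for s t
  proof -
    assume a: "s < L" "t < L" "s \<noteq> t"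
    show ?thesis
    proof (cases "s < t")
      case True then show ?thesis using BV[OF a(2)] by (auto simp: Vt_def)
    next
      case False then have "t < s" using a by simp
      then show ?thesis using BV[OF a(1)] by (auto simp: Vt_def)
    qed
  qed
  have onecl: "t < L \<Longrightarrow> x \<in> B t \<Longrightarrow> y \<in> B t \<Longrightarrow> x \<in> Good \<Longrightarrow> y \<in> Good \<Longrightarrow> \<sigma> x = \<sigma> y" for t x y
  proof -
    assume a: "t < L" "x \<in> B t" "y \<in> B t" "x \<in> Good" "y \<in> Good"
    obtain u where u: "B t \<subseteq> ballB n k Y (Vt t) u" using s1t[OF a(1)] by blast
    have "x < n" using a Good_def by auto
    then have "\<sigma> x < k" using sig by auto
    show ?thesis
      apply (rule sep_lemma[of k n \<sigma> x Y u y])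
      using kpos cl \<open>\<sigma> x < k\<close> kdvd npos u a by (auto simp: ballB_def Good_def r_def thr_def)
  qed
  define A where "A = {a. a < k \<and> G a \<noteq> {}}"
  have fA: "finite A" and Ak: "A \<subseteq> {..<k}" by (auto simp: A_def)
  define ta where "ta a = (LEAST t. B t \<inter> G a \<noteq> {})" for a
  define T where "T a = B (ta a)" for a
  have taP: "ta a < L \<and> T a \<inter> G a \<noteq> {} \<and> G a \<subseteq> Vt (ta a)" if aA: "a \<in> A" for a
  proof -
    obtain g where g: "g \<in> G a" using aA A_def by auto
    then have "g \<in> {0..<n}" by (auto simp: G_def Good_def)
    then have "g \<in> (\<Union>i<L. B i)" using s1u by simp
    then obtain t where t: "t < L" "g \<in> B t" by blast
    then have ex: "B t \<inter> G a \<noteq> {}" using g by auto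
    have "ta a \<le> t" unfolding ta_def by (rule Least_le) (rule ex)
    then have l: "ta a < L" using t by simp
    have i: "T a \<inter> G a \<noteq> {}" unfolding T_def ta_def by (rule LeastI[of _ t]) (rule ex)
    have "G a \<subseteq> Vt (ta a)"
    proof
      fix x assume x: "x \<in> G a"
      have "x \<notin> B i" if "i < ta a" for i
        using not_less_Least[OF that[unfolded ta_def]] x by auto
      moreover have "x < n" using x by (auto simp: G_def Good_def)
      ultimately show "x \<in> Vt (ta a)" by (auto simp: Vt_def)
    qed
    then show ?thesis using l i by blast
  qed
  have cardT: "card (G a) \<le> card (T a)" if aA: "a \<in> A" for a
  proof -
    have l: "ta a < L" and V: "G a \<subseteq> Vt (ta a)" using taP[OF aA] by auto
    obtain u where u: "\<forall>w\<in>Vt (ta a). card (ballB n k Y (Vt (ta a)) w) \<le> card (ballB n k Y (Vt (ta a)) u)"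
       "card (T a) = min (card (ballB n k Y (Vt (ta a)) u)) N"
      using s1t[OF l] unfolding T_def by blast
    obtain g where g: "g \<in> G a" using aA A_def by auto
    have fb: "finite (ballB n k Y (Vt (ta a)) g)" by (rule finite_subset[of _ "{0..<n}"]) (auto simp: ballB_def Vt_def)
    have "G a \<subseteq> ballB n k Y (Vt (ta a)) g"
    proof
      fix x assume x: "x \<in> G a"
      have "rowdist n Y g x \<le> real n / (4 * real k)"
        apply (rule same_lemma[of \<sigma>])
        using x g sigG by (auto simp: G_def Good_def r_def thr_def)
      then show "x \<in> ballB n k Y (Vt (ta a)) g" using V x by (auto simp: ballB_def)
    qed
    then have "card (G a) \<le> card (ballB n k Y (Vt (ta a)) g)" using fb card_mono by blast
    also have "\<dots> \<le> card (ballB n k Y (Vt (ta a)) u)" using u(1) V g by auto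
    finally show ?thesis using u(2) cardG aA A_def by auto
  qed
  have TL: "a \<in> A \<Longrightarrow> ta a < L" for a using taP by blast
  have GoodT: "Good \<inter> T a \<subseteq> G a" if aA: "a \<in> A" for a
  proof
    fix x assume x: "x \<in> Good \<inter> T a"
    obtain y where y: "y \<in> T a" "y \<in> G a" using taP[OF aA] by auto
    have yg: "y \<in> Good" using y(2) Gsub by blast
    have "\<sigma> x = \<sigma> y" using onecl[OF TL[OF aA], of x y] x y(1) yg unfolding T_def by blast
    then have sx: "\<sigma> x = a" using y(2) sigG by simp
    have "x < n" using x by (simp add: Good_def)
    then show "x \<in> G a" using x sx by (simp add: G_def cluster_def)
  qed
  have injta: "inj_on ta A"
  proof (rule inj_onI)
    fix a b assume a: "a \<in> A" "b \<in> A" "ta a = ta b"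
    obtain x where x: "x \<in> T a" "x \<in> G a" using taP[OF a(1)] by auto
    obtain y where y: "y \<in> T b" "y \<in> G b" using taP[OF a(2)] by auto
    have xg: "x \<in> Good" using x(2) Gsub by blast
    have yg: "y \<in> Good" using y(2) Gsub by blast
    have "y \<in> B (ta a)" using y(1) a(3) by (simp add: T_def)
    then have "\<sigma> x = \<sigma> y" using onecl[OF TL[OF a(1)], of x y] x(1) xg yg unfolding T_def by blast
    then show "a = b" using x(2) y(2) sigG by metis
  qed
  have F6: "card (G a) \<le> card (G a \<inter> T a) + card (Bad \<inter> T a)" if aA: "a \<in> A" for a
  proof -
    have "T a \<subseteq> (G a \<inter> T a) \<union> (Bad \<inter> T a)"
      using GoodT[OF aA] Bn[OF TL[OF aA]] BadEq unfolding T_def by blast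
    then have "card (T a) \<le> card ((G a \<inter> T a) \<union> (Bad \<inter> T a))"
      using fG fBad by (intro card_mono) auto
    also have "\<dots> \<le> card (G a \<inter> T a) + card (Bad \<inter> T a)" by (rule card_Un_le)
    finally show ?thesis using cardT[OF aA] by simp
  qed
  have Tdisj: "a \<in> A \<Longrightarrow> b \<in> A \<Longrightarrow> a \<noteq> b \<Longrightarrow> T a \<inter> T b = {}" for a b
    unfolding T_def using disj TL injta by (simp add: inj_on_eq_iff)
  have badsum: "(\<Sum>a\<in>A. card (Bad \<inter> T a)) \<le> m"
  proof -
    have "(\<Sum>a\<in>A. card (Bad \<inter> T a)) = card (\<Union>a\<in>A. Bad \<inter> T a)"
      using fA fBad Tdisj by (subst card_UN_disjoint) auto
    also have "\<dots> \<le> m" unfolding m_def using fBad by (intro card_mono) auto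
    finally show ?thesis .
  qed
  have F7: "(\<Sum>t\<in>{..<L} - ta ` A. card (B t)) \<le> 2 * m"
  proof -
    have e0: "(\<Sum>t\<in>{..<L} - ta ` A. card (B t)) = card (\<Union>t\<in>{..<L} - ta ` A. B t)"
    proof (rule card_UN_disjoint[symmetric])
      show "finite ({..<L} - ta ` A)" by simp
      show "\<forall>i\<in>{..<L} - ta ` A. finite (B i)" using fB by blast
      show "\<forall>i\<in>{..<L} - ta ` A. \<forall>j\<in>{..<L} - ta ` A. i \<noteq> j \<longrightarrow> B i \<inter> B j = {}"
        using disj by blast
    qed
    have sub: "(\<Union>t\<in>{..<L} - ta ` A. B t) \<subseteq> Bad \<union> (\<Union>a\<in>A. G a - T a)"
    proof
      fix x assume "x \<in> (\<Union>t\<in>{..<L} - ta ` A. B t)"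
      then obtain t where t: "t < L" "t \<notin> ta ` A" "x \<in> B t" by blast
      show "x \<in> Bad \<union> (\<Union>a\<in>A. G a - T a)"
      proof (cases "x \<in> Good")
        case False then show ?thesis using Bn[OF t(1)] t(3) BadEq by blast
      next
        case True
        have xn: "x < n" using True by (simp add: Good_def)
        define a where "a = \<sigma> x"
        have xa: "x \<in> G a" using True xn by (simp add: G_def cluster_def a_def)
        have aA: "a \<in> A" using xa sig xn by (auto simp: A_def a_def)
        have "t \<noteq> ta a" using t(2) aA by blast
        then have "x \<notin> T a" using disj[OF t(1) TL[OF aA]] t(3) unfolding T_def by blast
        then show ?thesis using xa aA by blast
      qed
    qed
    have f1: "finite (Bad \<union> (\<Union>a\<in>A. G a - T a))" using fBad fA fG by auto
    have e1: "card (\<Union>t\<in>{..<L} - ta ` A. B t) \<le> card (Bad \<union> (\<Union>a\<in>A. G a - T a))"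
      by (rule card_mono[OF f1 sub])
    have e2: "card (Bad \<union> (\<Union>a\<in>A. G a - T a)) \<le> m + card (\<Union>a\<in>A. G a - T a)"
      unfolding m_def by (rule card_Un_le)
    have e3: "card (\<Union>a\<in>A. G a - T a) \<le> (\<Sum>a\<in>A. card (G a - T a))" by (rule card_UN_le[OF fA])
    have e4: "(\<Sum>a\<in>A. card (G a - T a)) \<le> (\<Sum>a\<in>A. card (Bad \<inter> T a))"
    proof (rule sum_mono)
      fix a assume aA: "a \<in> A"
      have "card (G a - T a) = card (G a) - card (G a \<inter> T a)"
        using fG by (intro card_Diff_subset_Int) auto
      then show "card (G a - T a) \<le> card (Bad \<inter> T a)" using F6[OF aA] by linarith
    qed
    show ?thesis using badsum e0 e1 e2 e3 e4 by linarith
  qed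
  from s2 obtain J where J1: "inj_on J {..<k}" and J2': "J ` {..<k} \<subseteq> {..<length Bs}"
    and J3': "\<forall>a<k. \<forall>i<length Bs. i \<notin> J ` {..<k} \<longrightarrow> card (Bs ! i) \<le> card (Bs ! J a)"
    and J4': "\<forall>a<k. Bs ! J a \<subseteq> U a \<and> card (U a) = n div k"
    unfolding step2_output_def by (elim exE conjE) blast
  have J2: "J ` {..<k} \<subseteq> {..<L}" using J2' by (simp add: L_def)
  have J3: "\<forall>a<k. \<forall>i<L. i \<notin> J ` {..<k} \<longrightarrow> card (B i) \<le> card (B (J a))"
    using J3' by (simp add: L_def B_def)
  have J4: "\<forall>a<k. B (J a) \<subseteq> U a" using J4' by (simp add: B_def)
  define Jset where "Jset = J ` {..<k}"
  have cardJ: "card Jset = k" using J1 by (simp add: Jset_def card_image)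
  define Asel where "Asel = {a \<in> A. ta a \<in> Jset}"
  define Au where "Au = A - Asel"
  have AselA: "Asel \<subseteq> A" by (auto simp: Asel_def)
  have fAsel: "finite Asel" using fA AselA finite_subset by blast
  have IntJ: "Jset \<inter> ta ` A = ta ` Asel" by (auto simp: Asel_def)
  have c1: "card (ta ` Asel) = card Asel" using inj_on_subset[OF injta AselA] by (simp add: card_image)
  have c2: "card (Jset - ta ` A) = k - card Asel"
  proof -
    have "card (Jset - ta ` A) = card Jset - card (Jset \<inter> ta ` A)"
      using fAsel IntJ by (intro card_Diff_subset_Int) simp
    then show ?thesis using cardJ IntJ c1 by simp
  qed
  have c3: "card Au = card A - card Asel" unfolding Au_def using AselA fAsel by (simp add: card_Diff_subset)
  have c4: "card A \<le> k" using card_mono[OF _ Ak] by simp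
  have cAu: "card Au \<le> card (Jset - ta ` A)" using c2 c3 c4 by linarith
  have Aubound: "(\<Sum>a\<in>Au. card (G a)) \<le> 2 * m"
  proof (cases "Au = {}")
    case True then show ?thesis by simp
  next
    case False
    have fAu: "finite Au" using fA by (simp add: Au_def)
    define c where "c = Max ((\<lambda>a. card (G a)) ` Au)"
    have "c \<in> (\<lambda>a. card (G a)) ` Au" unfolding c_def using fAu False by (intro Max_in) auto
    then obtain a0 where a0: "a0 \<in> Au" "c = card (G a0)" by blast
    have le1: "card (G a) \<le> c" if "a \<in> Au" for a unfolding c_def using fAu that by (intro Max_ge) auto
    have f1: "(\<Sum>a\<in>Au. card (G a)) \<le> card Au * c"
      using sum_bounded_above[of Au "\<lambda>a. card (G a)" c] le1 by simp
    have f2: "card Au * c \<le> card (Jset - ta ` A) * c" using cAu by simp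
    have f3: "card (Jset - ta ` A) * c \<le> (\<Sum>s\<in>Jset - ta ` A. card (B s))"
    proof -
      have "c \<le> card (B s)" if s: "s \<in> Jset - ta ` A" for s
      proof -
        obtain b where b: "b < k" "s = J b" using s Jset_def by auto
        have a0A: "a0 \<in> A" "ta a0 \<notin> Jset" using a0(1) by (auto simp: Au_def Asel_def)
        have "card (B (ta a0)) \<le> card (B (J b))" using J3 b(1) TL[OF a0A(1)] a0A(2) Jset_def by blast
        then show ?thesis using cardT[OF a0A(1)] a0(2) b(2) unfolding T_def by simp
      qed
      then show ?thesis using sum_bounded_below[of "Jset - ta ` A" c "\<lambda>s. card (B s)"] by simp
    qed
    have f4: "(\<Sum>s\<in>Jset - ta ` A. card (B s)) \<le> (\<Sum>t\<in>{..<L} - ta ` A. card (B t))"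
      using J2 unfolding Jset_def by (intro sum_mono2) auto
    show ?thesis using f1 f2 f3 f4 F7 by linarith
  qed
  define p where "p a = inv_into {..<k} J (ta a)" for a
  have pP: "p a \<in> {..<k} \<and> J (p a) = ta a" if "a \<in> Asel" for a
  proof -
    have "ta a \<in> J ` {..<k}" using that unfolding Asel_def Jset_def by blast
    then show ?thesis unfolding p_def using inv_into_into[of "ta a" J "{..<k}"] f_inv_into_f[of "ta a" J "{..<k}"] by blast
  qed
  have injp: "inj_on p Asel"
  proof (rule inj_onI)
    fix a b assume ab: "a \<in> Asel" "b \<in> Asel" "p a = p b"
    then have "ta a = ta b" using pP by metis
    then show "a = b" using inj_onD[OF injta] ab AselA by blast
  qed
  have pS: "p ` Asel \<subseteq> {..<k}" using pP by blast
  obtain \<pi> where pi1: "bij_betw \<pi> {..<k} {..<k}" and pi2: "\<forall>a\<in>Asel. \<pi> a = p a"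
    using extend_bij[OF injp _ pS] AselA Ak by blast
  define S1 where "S1 = (\<Sum>a\<in>Asel. card (G a \<inter> T a))"
  define matched where "matched = card (\<Union>a<k. cluster n \<sigma> a \<inter> U (\<pi> a))"
  have S1m: "S1 \<le> matched"
  proof -
    have sub: "(\<Union>a\<in>Asel. G a \<inter> T a) \<subseteq> (\<Union>a<k. cluster n \<sigma> a \<inter> U (\<pi> a))"
    proof
      fix x assume "x \<in> (\<Union>a\<in>Asel. G a \<inter> T a)"
      then obtain a where a: "a \<in> Asel" "x \<in> G a" "x \<in> T a" by blast
      have ak: "a < k" using a(1) AselA Ak by auto
      have "T a = B (J (p a))" using pP[OF a(1)] by (simp add: T_def)
      also have "\<dots> \<subseteq> U (p a)" using J4 pP[OF a(1)] by blast
      finally have "x \<in> U (\<pi> a)" using a pi2 by auto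
      moreover have "x \<in> cluster n \<sigma> a" using a(2) by (simp add: G_def)
      ultimately show "x \<in> (\<Union>a<k. cluster n \<sigma> a \<inter> U (\<pi> a))" using ak by blast
    qed
    have fin: "finite (\<Union>a<k. cluster n \<sigma> a \<inter> U (\<pi> a))"
      by (rule finite_subset[of _ "{..<n}"]) (auto simp: cluster_def)
    have dj: "\<forall>a\<in>Asel. \<forall>b\<in>Asel. a \<noteq> b \<longrightarrow> (G a \<inter> T a) \<inter> (G b \<inter> T b) = {}"
      using sigG by blast
    have "S1 = card (\<Union>a\<in>Asel. G a \<inter> T a)" unfolding S1_def
      using fAsel fG dj by (intro card_UN_disjoint[symmetric]) auto
    also have "\<dots> \<le> matched" unfolding matched_def by (rule card_mono[OF fin sub])
    finally show ?thesis .
  qed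
  have F11: "(\<Sum>a\<in>Asel. card (G a)) \<le> S1 + m"
  proof -
    have g1: "(\<Sum>a\<in>Asel. card (G a)) \<le> (\<Sum>a\<in>Asel. card (G a \<inter> T a) + card (Bad \<inter> T a))"
      using F6 AselA by (intro sum_mono) auto
    have g2: "(\<Sum>a\<in>Asel. card (G a \<inter> T a) + card (Bad \<inter> T a)) = S1 + (\<Sum>a\<in>Asel. card (Bad \<inter> T a))"
      by (simp add: sum.distrib S1_def)
    have g3: "(\<Sum>a\<in>Asel. card (Bad \<inter> T a)) \<le> (\<Sum>a\<in>A. card (Bad \<inter> T a))"
      using AselA fA by (intro sum_mono2) auto
    show ?thesis using g1 g2 g3 badsum by linarith
  qed
  have F12: "(\<Sum>a\<in>A. card (G a)) + m = n"
  proof -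
    have GU: "Good = (\<Union>a\<in>A. G a)"
    proof
      show "Good \<subseteq> (\<Union>a\<in>A. G a)"
      proof
        fix x assume x: "x \<in> Good"
        then have xn: "x < n" by (simp add: Good_def)
        have xg: "x \<in> G (\<sigma> x)" using x xn by (simp add: G_def cluster_def)
        then have "\<sigma> x \<in> A" using sig xn by (auto simp: A_def)
        then show "x \<in> (\<Union>a\<in>A. G a)" using xg by blast
      qed
    qed (use Gsub in blast)
    have dj: "\<forall>a\<in>A. \<forall>b\<in>A. a \<noteq> b \<longrightarrow> G a \<inter> G b = {}" using sigG by blast
    have "card Good = (\<Sum>a\<in>A. card (G a))"
      unfolding GU using fA fG dj by (intro card_UN_disjoint) auto
    moreover have "card Good + card Bad = n"
    proof -
      have "card (Good \<union> Bad) = card Good + card Bad" using fGood fBad BadEq by (intro card_Un_disjoint) auto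
      moreover have "Good \<union> Bad = {0..<n}" using BadEq by (auto simp: Good_def)
      ultimately show ?thesis by simp
    qed
    ultimately show ?thesis unfolding m_def by simp
  qed
  have splitA: "(\<Sum>a\<in>A. card (G a)) = (\<Sum>a\<in>Au. card (G a)) + (\<Sum>a\<in>Asel. card (G a))"
    unfolding Au_def using sum.subset_diff[OF AselA fA] by simp
  have natres: "n \<le> matched + 4 * m" using splitA F12 F11 Aubound S1m by linarith
  have rnn: "r u \<ge> 0" for u by (simp add: r_def sum_nonneg)
  have dsum: "\<delta> = (\<Sum>u<n. r u)" by (simp add: \<delta>_def entry_l1_def r_def)
  have mthr: "real m * thr \<le> \<delta>"
  proof -
    have "real m * thr = (\<Sum>u\<in>Bad. thr)" by (simp add: m_def)
    also have "\<dots> \<le> (\<Sum>u\<in>Bad. r u)" by (rule sum_mono) (simp add: Bad_def)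
    also have "\<dots> \<le> (\<Sum>u<n. r u)" using rnn by (intro sum_mono2) (auto simp: Bad_def)
    finally show ?thesis using dsum by simp
  qed
  have EY: "entry_l1 n (Ystar \<sigma>) = real n * real N"
  proof -
    have "entry_l1 n (Ystar \<sigma>) = (\<Sum>i<n. real (card (cluster n \<sigma> (\<sigma> i))))"
      unfolding entry_l1_def by (simp add: Ystar_row)
    also have "\<dots> = (\<Sum>i<n. real N)" using cl sig by (intro sum.cong) (auto simp: N_def)
    finally show ?thesis by simp
  qed
  have thrN: "thr = real N / 8" unfolding thr_def using nN kpos by (simp add: field_simps)
  have NposR: "real N > 0" using Npos by simp
  have q1: "4 * real m \<le> 32 * \<delta> / real N" using mthr thrN NposR by (simp add: field_simps)
  have q2: "(1 - 32 * (\<delta> / (real n * real N))) * real n = real n - 32 * \<delta> / real N"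
    using npos NposR by (simp add: field_simps)
  have q3: "real n \<le> real matched + 4 * real m" using natres by linarith
  have "(1 - 32 * (\<delta> / entry_l1 n (Ystar \<sigma>))) * real n \<le> real matched"
    using q1 q2 q3 EY by simp
  then show ?thesis using pi1 unfolding matched_def \<delta>_def by blast
qed
theorem lemma13:
  "\<exists>C>0. \<forall>(n::nat) (k::nat) (d::nat) (h::nat \<Rightarrow> nat \<Rightarrow> real) (\<sigma>::nat \<Rightarrow> nat)
        (Y::nat \<Rightarrow> nat \<Rightarrow> real) (Bs::nat set list) (U::nat \<Rightarrow> nat set).
     n \<ge> 4 \<longrightarrow> k \<ge> 2 \<longrightarrow> k dvd n \<longrightarrow>
     (\<forall>i<n. \<sigma> i < k) \<longrightarrow> (\<forall>a<k. card (cluster n \<sigma> a) = n div k) \<longrightarrow>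
     sdp_optimal n k d h Y \<longrightarrow>
     step1_output n k Y Bs \<longrightarrow> step2_output n k Bs U \<longrightarrow>
     (\<exists>\<pi>. bij_betw \<pi> {..<k} {..<k} \<and>
        real (card (\<Union>a<k. cluster n \<sigma> a \<inter> U (\<pi> a)))
          \<ge> (1 - C * (entry_l1 n (\<lambda>i j. Y i j - Ystar \<sigma> i j) / entry_l1 n (Ystar \<sigma>))) * real n)"
proof (rule exI[of _ 32], intro conjI allI impI)
  show "(0::real) < 32" by simp
next
  fix n k d :: nat and h :: "nat \<Rightarrow> nat \<Rightarrow> real" and \<sigma> :: "nat \<Rightarrow> nat"
    and Y :: "nat \<Rightarrow> nat \<Rightarrow> real" and Bs :: "nat set list" and U :: "nat \<Rightarrow> nat set"
  assume "n \<ge> 4" "k \<ge> 2" "k dvd n" "\<forall>i<n. \<sigma> i < k" "\<forall>a<k. card (cluster n \<sigma> a) = n div k"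
    "sdp_optimal n k d h Y" "step1_output n k Y Bs" "step2_output n k Bs U"
  then show "\<exists>\<pi>. bij_betw \<pi> {..<k} {..<k} \<and>
        real (card (\<Union>a<k. cluster n \<sigma> a \<inter> U (\<pi> a)))
          \<ge> (1 - 32 * (entry_l1 n (\<lambda>i j. Y i j - Ystar \<sigma> i j) / entry_l1 n (Ystar \<sigma>))) * real n"
    using main_lemma[of n k \<sigma> Y Bs U] by blast
qed

end
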